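(* Let $K$ be a valued field and $d,r\ge1$. Then any finite set $X\subseteq K^d$ with $|X|\ge(d+1)(r-1)+1$ can be partitioned into sets $X_1,\dots,X_r$ with $|X_i|=d+1$ for $i<r$, $|X_r|=|X|-(d+1)(r-1)$, and $\operatorname{conv}(X_i)\supseteq\operatorname{conv}(X_j)$ for all $1\le i\le j\le r$. In particular $\bigcap_{i=1}^r\operatorname{conv}(X_i)\supseteq X_r\ne\emptyset$.
   Context: $K$ is a field with valuation $\nu$ and valuation ring $\mathcal{O}=\{x:\nu(x)\ge0\}$. For $Y\subseteq K^d$, $\operatorname{conv}(Y)=\{\sum_{i=1}^n\alpha_iy_i: n\ge1,y_i\in Y,\alpha_i\in\mathcal{O},\sum_i\alpha_i=1\}$. *)

theory Defs
  imports Main "HOL-Library.Cardinality"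
begin

text \<open>The value at 0 is the formal symbol infinity; we model this by only constraining
  nu on nonzero elements and treating 0 separately in the valuation ring.\<close>
definition valuation :: "('a::field \<Rightarrow> 'g::linordered_ab_group_add) \<Rightarrow> bool" where
  "valuation \<nu> \<longleftrightarrow>
     (\<forall>x y. x \<noteq> 0 \<longrightarrow> y \<noteq> 0 \<longrightarrow> \<nu> (x * y) = \<nu> x + \<nu> y) \<and>
     (\<forall>x y. x \<noteq> 0 \<longrightarrow> y \<noteq> 0 \<longrightarrow> x + y \<noteq> 0 \<longrightarrow> min (\<nu> x) (\<nu> y) \<le> \<nu> (x + y))"

definition val_ring :: "('a::field \<Rightarrow> 'g::linordered_ab_group_add) \<Rightarrow> 'a set" where
  "val_ring \<nu> = {x. x = 0 \<or> 0 \<le> \<nu> x}"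

text \<open>Points of K^d are functions 'n => 'a with 'n finite, d = CARD('n).
  conv(Y) = { sum_i alpha_i y_i : n >= 1, y_i in Y, alpha_i in O, sum alpha_i = 1 }.\<close>
definition vconv :: "('a::field \<Rightarrow> 'g::linordered_ab_group_add) \<Rightarrow> ('n \<Rightarrow> 'a) set \<Rightarrow> ('n \<Rightarrow> 'a) set" where
  "vconv \<nu> Y = {v. \<exists>(m::nat) (y::nat \<Rightarrow> 'n \<Rightarrow> 'a) (\<alpha>::nat \<Rightarrow> 'a).
      m \<ge> 1 \<and> (\<forall>i<m. y i \<in> Y) \<and> (\<forall>i<m. \<alpha> i \<in> val_ring \<nu>) \<and> (\<Sum>i<m. \<alpha> i) = 1 \<and>
      v = (\<lambda>j. \<Sum>i<m. \<alpha> i * y i j)}"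

end

theory Submission
  imports Defs "HOL-Analysis.Analysis"
begin

lemma dep_exists:
  fixes S :: "('n::finite \<Rightarrow> 'a::field) set"
  assumes "finite S" "card S > CARD('n)"
  shows "\<exists>c. (\<forall>j. (\<Sum>v\<in>S. c v * v j) = 0) \<and> (\<exists>v\<in>S. c v \<noteq> 0)"
proof -
  define T where "T = vec_lambda ` S"
  have inj: "inj_on vec_lambda S" by (auto simp: inj_on_def)
  have fT: "finite T" using assms T_def by auto
  have cT: "card T = card S" using inj T_def card_image by blast
  have "vec.dim T \<le> vec.dim (UNIV :: ('a^'n) set)" by (rule vec.dim_subset) simp
  also have "\<dots> = CARD('n)" by (simp add: card_cart_basis)
  finally have "vec.dependent T" using assms cT
    by (intro vec.dependent_biggerset_general) simp
  then obtain u where u: "\<exists>v\<in>T. u v \<noteq> 0" "(\<Sum>v\<in>T. u v *s v) = 0"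
    using vec.dependent_finite[OF fT] by blast
  have "(\<Sum>v\<in>S. u (vec_lambda v) *s vec_lambda v) = 0"
    using u(2) unfolding T_def sum.reindex[OF inj] by (simp add: comp_def)
  then have "\<forall>j. (\<Sum>v\<in>S. u (vec_lambda v) * v j) = 0"
  proof (intro allI)
    fix j
    assume h: "(\<Sum>v\<in>S. u (vec_lambda v) *s vec_lambda v) = 0"
    have "(\<Sum>v\<in>S. u (vec_lambda v) *s vec_lambda v) $ j = 0" using h by simp
    then show "(\<Sum>v\<in>S. u (vec_lambda v) * v j) = 0" by (simp add: sum_component)
  qed
  moreover have "\<exists>v\<in>S. u (vec_lambda v) \<noteq> 0" using u(1) T_def by auto
  ultimately show ?thesis by (intro exI[of _ "\<lambda>v. u (vec_lambda v)"]) simp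
qed

lemma add_self_eq0: "(a::'g::linordered_ab_group_add) + a = 0 \<Longrightarrow> a = 0"
proof (rule ccontr)
  assume h: "a + a = 0" "a \<noteq> 0"
  show False
  proof (cases "a < 0")
    case True then have "a + a < 0" by (intro add_neg_neg)
    then show False using h by simp
  next
    case False then have "0 < a" using h(2) by simp
    then have "0 < a + a" by (intro add_pos_pos)
    then show False using h by simp
  qed
qed

context
  fixes \<nu> :: "'a::field \<Rightarrow> 'g::linordered_ab_group_add"
  assumes val: "valuation \<nu>"
begin

lemma nu_mult: "x \<noteq> 0 \<Longrightarrow> y \<noteq> 0 \<Longrightarrow> \<nu> (x * y) = \<nu> x + \<nu> y"
  using val unfolding valuation_def by blast

lemma nu_add: "x \<noteq> 0 \<Longrightarrow> y \<noteq> 0 \<Longrightarrow> x + y \<noteq> 0 \<Longrightarrow> min (\<nu> x) (\<nu> y) \<le> \<nu> (x + y)"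
  using val unfolding valuation_def by blast

lemma nu_one: "\<nu> 1 = 0"
proof -
  have "\<nu> 1 = \<nu> 1 + \<nu> 1" using nu_mult[of 1 1] by simp
  then show ?thesis by simp
qed

lemma nu_inverse: "x \<noteq> 0 \<Longrightarrow> \<nu> (inverse x) = - \<nu> x"
proof -
  assume x: "x \<noteq> 0"
  have "\<nu> (x * inverse x) = \<nu> x + \<nu> (inverse x)" using x by (intro nu_mult) simp_all
  then have "\<nu> x + \<nu> (inverse x) = 0" using x nu_one by simp
  then show ?thesis by (rule minus_unique[symmetric])
qed

lemma nu_minus_one: "\<nu> (-1) = 0"
proof -
  have "\<nu> ((-1) * (-1)) = \<nu> (-1) + \<nu> (-1)" by (intro nu_mult) simp_all
  then have "\<nu> (-1) + \<nu> (-1) = 0" using nu_one by simp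
  then show ?thesis by (rule add_self_eq0)
qed

lemma O_zero: "0 \<in> val_ring \<nu>" by (simp add: val_ring_def)
lemma O_one: "1 \<in> val_ring \<nu>" by (simp add: val_ring_def nu_one)

lemma O_mult: "x \<in> val_ring \<nu> \<Longrightarrow> y \<in> val_ring \<nu> \<Longrightarrow> x * y \<in> val_ring \<nu>"
proof -
  assume a: "x \<in> val_ring \<nu>" "y \<in> val_ring \<nu>"
  show ?thesis
  proof (cases "x = 0 \<or> y = 0")
    case True then show ?thesis by (auto simp: val_ring_def)
  next
    case False
    then have "0 \<le> \<nu> x" "0 \<le> \<nu> y" using a by (auto simp: val_ring_def)
    then have "0 \<le> \<nu> x + \<nu> y" by (rule add_nonneg_nonneg)
    then show ?thesis using False nu_mult[of x y] by (simp add: val_ring_def)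
  qed
qed

lemma O_add: "x \<in> val_ring \<nu> \<Longrightarrow> y \<in> val_ring \<nu> \<Longrightarrow> x + y \<in> val_ring \<nu>"
proof -
  assume a: "x \<in> val_ring \<nu>" "y \<in> val_ring \<nu>"
  show ?thesis
  proof (cases "x = 0 \<or> y = 0 \<or> x + y = 0")
    case True then show ?thesis using a by (auto simp: val_ring_def)
  next
    case False
    then have m: "min (\<nu> x) (\<nu> y) \<le> \<nu> (x + y)" using nu_add by blast
    have "0 \<le> \<nu> x" "0 \<le> \<nu> y" using a False by (auto simp: val_ring_def)
    then have "0 \<le> min (\<nu> x) (\<nu> y)" by simp
    then have "0 \<le> \<nu> (x + y)" using m by (rule order_trans)
    then show ?thesis by (simp add: val_ring_def)
  qed
qed

lemma O_minus: "x \<in> val_ring \<nu> \<Longrightarrow> - x \<in> val_ring \<nu>"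
proof -
  assume "x \<in> val_ring \<nu>"
  moreover have "-1 \<in> val_ring \<nu>" by (simp add: val_ring_def nu_minus_one)
  ultimately have "(-1) * x \<in> val_ring \<nu>" by (intro O_mult)
  then show ?thesis by simp
qed

lemma O_sum: "(\<And>a. a \<in> A \<Longrightarrow> f a \<in> val_ring \<nu>) \<Longrightarrow> sum f A \<in> val_ring \<nu>"
proof (induction A rule: infinite_finite_induct)
  case (infinite A) then show ?case by (simp add: O_zero)
next
  case empty then show ?case by (simp add: O_zero)
next
  case (insert x F)
  then have "f x \<in> val_ring \<nu>" "sum f F \<in> val_ring \<nu>" by simp_all
  then have "f x + sum f F \<in> val_ring \<nu>" by (rule O_add)
  then show ?case using insert(1,2) by simp
qed

lemma O_div: "x \<noteq> 0 \<Longrightarrow> \<nu> x \<le> \<nu> y \<Longrightarrow> y / x \<in> val_ring \<nu>"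
proof (cases "y = 0")
  case True then show ?thesis by (simp add: val_ring_def)
next
  case False
  assume x: "x \<noteq> 0" and le: "\<nu> x \<le> \<nu> y"
  have "\<nu> (y * inverse x) = \<nu> y + \<nu> (inverse x)" using x False by (intro nu_mult) simp_all
  also have "\<dots> = \<nu> y - \<nu> x" using nu_inverse[OF x] by simp
  finally have "\<nu> (y / x) = \<nu> y - \<nu> x" by (simp add: divide_inverse)
  then have "0 \<le> \<nu> (y / x)" using le by simp
  then show ?thesis by (simp add: val_ring_def)
qed

end

lemma vconv_sumI:
  fixes A :: "'b set" and f :: "'b \<Rightarrow> 'n \<Rightarrow> 'a::field"
  assumes "finite A" "A \<noteq> {}" "\<forall>a\<in>A. f a \<in> Y" "\<forall>a\<in>A. c a \<in> val_ring \<nu>" "sum c A = 1"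
  shows "(\<lambda>j. \<Sum>a\<in>A. c a * f a j) \<in> vconv \<nu> Y"
proof -
  obtain h where h: "bij_betw h {0..<card A} A" using ex_bij_betw_nat_finite[OF assms(1)] by blast
  have hl: "bij_betw h {..<card A} A" using h by (simp add: lessThan_atLeast0)
  have hi: "\<forall>i<card A. h i \<in> A" using bij_betwE[OF hl] by simp
  have 1: "(\<Sum>i<card A. c (h i)) = 1" using sum.reindex_bij_betw[OF hl, of c] assms(5) by (rule trans)
  have 2: "(\<lambda>j. \<Sum>a\<in>A. c a * f a j) = (\<lambda>j. \<Sum>i<card A. c (h i) * f (h i) j)"
    by (intro ext) (rule sum.reindex_bij_betw[OF hl, symmetric])
  have c1: "1 \<le> card A" using assms(1,2) by (simp add: Suc_le_eq card_gt_0_iff)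
  have c2: "\<forall>i<card A. f (h i) \<in> Y" using hi assms(3) by blast
  have c3: "\<forall>i<card A. c (h i) \<in> val_ring \<nu>" using hi assms(4) by blast
  show ?thesis unfolding vconv_def mem_Collect_eq
    apply (rule exI[of _ "card A"], rule exI[of _ "\<lambda>i. f (h i)"], rule exI[of _ "\<lambda>i. c (h i)"])
    using c1 c2 c3 1 2 by (intro conjI) simp_all
qed

lemma vconv_mono: "Y \<subseteq> Z \<Longrightarrow> vconv \<nu> Y \<subseteq> vconv \<nu> Z"
  unfolding vconv_def by blast

lemma vconv_base: "valuation \<nu> \<Longrightarrow> Y \<subseteq> vconv \<nu> Y"
proof
  fix v assume val: "valuation \<nu>" and "v \<in> Y"
  then show "v \<in> vconv \<nu> Y" unfolding vconv_def
    by (intro CollectI exI[of _ 1] exI[of _ "\<lambda>_. v"] exI[of _ "\<lambda>_. 1"]) (simp add: O_one)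
qed

lemma vconv_insert:
  assumes val: "valuation \<nu>" and y: "y \<in> vconv \<nu> Z"
  shows "vconv \<nu> (insert y Z) \<subseteq> vconv \<nu> Z"
proof
  fix v assume "v \<in> vconv \<nu> (insert y Z)"
  then obtain m :: nat and w \<alpha> where m: "m \<ge> 1" "\<forall>i<m. w i \<in> insert y Z" "\<forall>i<m. \<alpha> i \<in> val_ring \<nu>"
    "(\<Sum>i<m. \<alpha> i) = 1" "v = (\<lambda>j. \<Sum>i<m. \<alpha> i * w i j)"
    unfolding vconv_def mem_Collect_eq by blast
  obtain n :: nat and z \<gamma> where n: "n \<ge> 1" "\<forall>k<n. z k \<in> Z" "\<forall>k<n. \<gamma> k \<in> val_ring \<nu>"
    "(\<Sum>k<n. \<gamma> k) = 1" "y = (\<lambda>j. \<Sum>k<n. \<gamma> k * z k j)"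
    using y unfolding vconv_def mem_Collect_eq by blast
  define \<delta> where "\<delta> i k = (if w i = y then \<gamma> k else (if k = 0 then 1 else 0))" for i k
  define f where "f p = (if w (fst p) = y then z (snd p) else w (fst p))" for p
  define A where "A = {..<m} \<times> {..<n}"
  have n0: "0 \<in> {..<n}" using n by auto
  have inner: "(\<Sum>k<n. \<delta> i k * f (i, k) j) = w i j" for i j
  proof (cases "w i = y")
    case True then show ?thesis using n(5) by (simp add: \<delta>_def f_def)
  next
    case False
    have "(\<Sum>k<n. \<delta> i k * f (i, k) j) = (\<Sum>k<n. (if k = 0 then w i j else 0))"
      using False by (intro sum.cong) (auto simp: \<delta>_def f_def)
    also have "\<dots> = w i j" using n0 by (simp add: sum.delta)
    finally show ?thesis .
  qed
  have innerc: "(\<Sum>k<n. \<delta> i k) = 1" for i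
  proof (cases "w i = y")
    case True then show ?thesis using n(4) by (simp add: \<delta>_def)
  next
    case False then show ?thesis using n0 by (simp add: \<delta>_def sum.delta)
  qed
  have "v = (\<lambda>j. \<Sum>p\<in>A. (\<alpha> (fst p) * \<delta> (fst p) (snd p)) * f p j)"
  proof
    fix j
    have "(\<Sum>p\<in>A. (\<alpha> (fst p) * \<delta> (fst p) (snd p)) * f p j)
        = (\<Sum>i<m. \<Sum>k<n. \<alpha> i * (\<delta> i k * f (i,k) j))"
      unfolding A_def sum.cartesian_product by (intro sum.cong) (auto simp: mult.assoc)
    also have "\<dots> = (\<Sum>i<m. \<alpha> i * w i j)"
      by (simp add: sum_distrib_left[symmetric] inner)
    finally show "v j = (\<Sum>p\<in>A. (\<alpha> (fst p) * \<delta> (fst p) (snd p)) * f p j)" using m(5) by simp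
  qed
  also have "\<dots> \<in> vconv \<nu> Z"
  proof (rule vconv_sumI)
    show "finite A" "A \<noteq> {}" using m n by (auto simp: A_def)
    show "\<forall>a\<in>A. f a \<in> Z" using m(2) n(2) by (auto simp: A_def f_def)
    show "\<forall>a\<in>A. \<alpha> (fst a) * \<delta> (fst a) (snd a) \<in> val_ring \<nu>"
      using m(3) n(3) by (auto simp: A_def \<delta>_def intro!: O_mult[OF val] O_one[OF val] O_zero[OF val])
    have "(\<Sum>a\<in>A. \<alpha> (fst a) * \<delta> (fst a) (snd a)) = (\<Sum>i<m. \<Sum>k<n. \<alpha> i * \<delta> i k)"
      unfolding A_def sum.cartesian_product by (intro sum.cong) auto
    also have "\<dots> = 1" by (simp add: sum_distrib_left[symmetric] innerc m(4))
    finally show "(\<Sum>a\<in>A. \<alpha> (fst a) * \<delta> (fst a) (snd a)) = 1" .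
  qed
  finally show "v \<in> vconv \<nu> Z" .
qed

lemma redundant:
  fixes Y :: "('n::finite \<Rightarrow> 'a::field) set" and \<nu> :: "'a \<Rightarrow> 'g::linordered_ab_group_add"
  assumes val: "valuation \<nu>" and fin: "finite Y" and cardY: "card Y \<ge> CARD('n) + 2"
  shows "\<exists>y\<in>Y. y \<in> vconv \<nu> (Y - {y})"
proof -
  have "Y \<noteq> {}" using cardY by auto
  then obtain y0 where y0: "y0 \<in> Y" by blast
  define Z where "Z = Y - {y0}"
  have finZ: "finite Z" using fin Z_def by simp
  have cZ: "card Z > CARD('n)" using cardY y0 fin by (simp add: Z_def card_Diff_singleton)
  define D where "D = (\<lambda>z. z - y0) ` Z"
  have inj: "inj_on (\<lambda>z. z - y0) Z" by (rule inj_onI) (auto simp: fun_eq_iff)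
  have "card D = card Z" using inj D_def card_image by blast
  then obtain c where c: "\<forall>j. (\<Sum>v\<in>D. c v * v j) = 0" "\<exists>v\<in>D. c v \<noteq> 0"
    using dep_exists[of D] finZ cZ D_def by auto
  define c' where "c' z = c (z - y0)" for z
  have dep: "(\<Sum>z\<in>Z. c' z * (z j - y0 j)) = 0" for j
    using c(1) unfolding D_def sum.reindex[OF inj] by (simp add: c'_def)
  define N where "N = {z\<in>Z. c' z \<noteq> 0}"
  have finN: "finite N" "N \<noteq> {}" using finZ c(2) by (auto simp: N_def D_def c'_def)
  define mn where "mn = Min ((\<lambda>z. \<nu> (c' z)) ` N)"
  have "mn \<in> (\<lambda>z. \<nu> (c' z)) ` N" unfolding mn_def using finN by (intro Min_in) auto
  then obtain zs where zs: "zs \<in> N" "\<nu> (c' zs) = mn" by blast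
  have zsmin: "\<nu> (c' zs) \<le> \<nu> (c' z)" if "z \<in> N" for z
    using zs(2) finN that unfolding mn_def by simp
  have zsZ: "zs \<in> Z" and czs: "c' zs \<noteq> 0" using zs(1) by (auto simp: N_def)
  define \<beta> where "\<beta> z = - (c' z / c' zs)" for z
  have \<beta>O: "\<beta> z \<in> val_ring \<nu>" if "z \<in> Z" for z
  proof (cases "c' z = 0")
    case True then show ?thesis by (simp add: \<beta>_def O_zero[OF val])
  next
    case False
    then have "z \<in> N" using that by (simp add: N_def)
    then show ?thesis unfolding \<beta>_def using zsmin czs
      by (intro O_minus[OF val] O_div[OF val]) auto
  qed
  define Z' where "Z' = Z - {zs}"
  define A where "A = insert y0 Z'"
  define \<alpha> where "\<alpha> a = (if a = y0 then 1 - (\<Sum>z\<in>Z'. \<beta> z) else \<beta> a)" for a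
  have y0Z': "y0 \<notin> Z'" by (simp add: Z'_def Z_def)
  have finZ': "finite Z'" using finZ by (simp add: Z'_def)
  have sumZ': "(\<Sum>a\<in>Z'. \<alpha> a * g a) = (\<Sum>a\<in>Z'. \<beta> a * g a)" for g
    using y0Z' by (intro sum.cong) (auto simp: \<alpha>_def)
  have key: "zs j = (\<Sum>a\<in>A. \<alpha> a * a j)" for j
  proof -
    have "0 = c' zs * (zs j - y0 j) + (\<Sum>z\<in>Z'. c' z * (z j - y0 j))"
      using dep[of j] sum.remove[OF finZ zsZ, of "\<lambda>z. c' z * (z j - y0 j)"] by (simp add: Z'_def)
    then have "zs j - y0 j = - (\<Sum>z\<in>Z'. c' z * (z j - y0 j)) / c' zs"
      using czs by (simp add: field_simps)
    also have "\<dots> = (\<Sum>z\<in>Z'. - (c' z * (z j - y0 j)) / c' zs)"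
      by (simp add: sum_divide_distrib sum_negf)
    also have "\<dots> = (\<Sum>z\<in>Z'. \<beta> z * (z j - y0 j))"
      by (intro sum.cong) (simp_all add: \<beta>_def)
    also have "\<dots> = (\<Sum>z\<in>Z'. \<beta> z * z j) - (\<Sum>z\<in>Z'. \<beta> z) * y0 j"
      by (simp add: right_diff_distrib sum_subtractf sum_distrib_right)
    finally have e: "zs j = y0 j + (\<Sum>z\<in>Z'. \<beta> z * z j) - (\<Sum>z\<in>Z'. \<beta> z) * y0 j"
      by (simp add: algebra_simps)
    have "(\<Sum>a\<in>A. \<alpha> a * a j) = \<alpha> y0 * y0 j + (\<Sum>a\<in>Z'. \<alpha> a * a j)"
      unfolding A_def using finZ' y0Z' by simp
    also have "\<dots> = (1 - (\<Sum>z\<in>Z'. \<beta> z)) * y0 j + (\<Sum>z\<in>Z'. \<beta> z * z j)"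
      using sumZ'[of "\<lambda>a. a j"] by (simp add: \<alpha>_def)
    finally have e2: "(\<Sum>a\<in>A. \<alpha> a * a j) = (1 - (\<Sum>z\<in>Z'. \<beta> z)) * y0 j + (\<Sum>z\<in>Z'. \<beta> z * z j)" .
    have gen: "\<And>a b c::'a. a + c - b * a = (1 - b) * a + c" by (simp add: algebra_simps)
    show ?thesis unfolding e2 by (subst e) (rule gen)
  qed
  have "zs \<in> vconv \<nu> (Y - {zs})"
  proof -
    have "(\<lambda>j. \<Sum>a\<in>A. \<alpha> a * (\<lambda>a. a) a j) \<in> vconv \<nu> (Y - {zs})"
    proof (rule vconv_sumI)
      show "finite A" "A \<noteq> {}" using finZ' by (auto simp: A_def)
      show "\<forall>a\<in>A. a \<in> Y - {zs}" using y0 zsZ by (auto simp: A_def Z'_def Z_def)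
      show "\<forall>a\<in>A. \<alpha> a \<in> val_ring \<nu>"
      proof
        fix a assume "a \<in> A"
        show "\<alpha> a \<in> val_ring \<nu>"
        proof (cases "a = y0")
          case True
          have "(\<Sum>z\<in>Z'. \<beta> z) \<in> val_ring \<nu>" using \<beta>O by (intro O_sum[OF val]) (auto simp: Z'_def)
          then have "- (\<Sum>z\<in>Z'. \<beta> z) \<in> val_ring \<nu>" by (rule O_minus[OF val])
          then have "1 + - (\<Sum>z\<in>Z'. \<beta> z) \<in> val_ring \<nu>" by (intro O_add[OF val] O_one[OF val])
          then show ?thesis using True by (simp add: \<alpha>_def)
        next
          case False then show ?thesis using \<open>a \<in> A\<close> \<beta>O by (auto simp: \<alpha>_def A_def Z'_def)
        qed
      qed
      have "sum \<alpha> A = \<alpha> y0 + sum \<alpha> Z'" unfolding A_def using finZ' y0Z' by simp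
      also have "sum \<alpha> Z' = (\<Sum>z\<in>Z'. \<beta> z)" using sumZ'[of "\<lambda>_. 1"] by simp
      finally show "sum \<alpha> A = 1" by (simp add: \<alpha>_def)
    qed
    moreover have "(\<lambda>j. \<Sum>a\<in>A. \<alpha> a * (\<lambda>a. a) a j) = zs" using key by (simp add: fun_eq_iff)
    ultimately show ?thesis by simp
  qed
  then show ?thesis using zsZ Z_def by blast
qed

lemma reduce:
  fixes Y :: "('n::finite \<Rightarrow> 'a::field) set" and \<nu> :: "'a \<Rightarrow> 'g::linordered_ab_group_add"
  assumes val: "valuation \<nu>" and "finite Y" "Y \<noteq> {}"
  shows "\<exists>Y'\<subseteq>Y. card Y' \<le> CARD('n) + 1 \<and> vconv \<nu> Y \<subseteq> vconv \<nu> Y'"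
  using assms(2,3)
proof (induction "card Y" arbitrary: Y rule: less_induct)
  case less
  show ?case
  proof (cases "card Y \<le> CARD('n) + 1")
    case True then show ?thesis by blast
  next
    case False
    then have cY: "card Y \<ge> CARD('n) + 2" by simp
    obtain y where y: "y \<in> Y" "y \<in> vconv \<nu> (Y - {y})"
      using redundant[OF val less.prems(1) cY] by blast
    have "insert y (Y - {y}) = Y" using y(1) by blast
    then have sub1: "vconv \<nu> Y \<subseteq> vconv \<nu> (Y - {y})" using vconv_insert[OF val y(2)] by simp
    have lt: "card (Y - {y}) < card Y" using y(1) less.prems(1) by (rule card_Diff1_less[rotated])
    have "card (Y - {y}) \<ge> 1" using cY y(1) less.prems(1) by (simp add: card_Diff_singleton)
    then have ne: "Y - {y} \<noteq> {}" by (metis card.empty le_zero_eq one_neq_zero)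
    obtain Y' where Y': "Y' \<subseteq> Y - {y}" "card Y' \<le> CARD('n) + 1" "vconv \<nu> (Y - {y}) \<subseteq> vconv \<nu> Y'"
      using less.hyps[OF lt _ ne] less.prems(1) by auto
    show ?thesis
      using Y' sub1 by (intro exI[of _ Y']) auto
  qed
qed

lemma pick:
  fixes X :: "('n::finite \<Rightarrow> 'a::field) set" and \<nu> :: "'a \<Rightarrow> 'g::linordered_ab_group_add"
  assumes val: "valuation \<nu>" and fin: "finite X" and cX: "card X \<ge> CARD('n) + 1"
  shows "\<exists>X1\<subseteq>X. card X1 = CARD('n) + 1 \<and> vconv \<nu> X1 = vconv \<nu> X"
proof -
  have "X \<noteq> {}" using cX by auto
  then obtain Y' where Y': "Y' \<subseteq> X" "card Y' \<le> CARD('n) + 1" "vconv \<nu> X \<subseteq> vconv \<nu> Y'"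
    using reduce[OF val fin] by blast
  obtain B where B: "Y' \<subseteq> B" "B \<subseteq> X" "card B = CARD('n) + 1"
    using exists_subset_between[OF Y'(2) cX Y'(1) fin] by blast
  have "vconv \<nu> B = vconv \<nu> X"
    using vconv_mono[OF B(1), of \<nu>] vconv_mono[OF B(2), of \<nu>] Y'(3) by blast
  then show ?thesis using B by blast
qed

lemma main_aux:
  fixes \<nu> :: "'a::field \<Rightarrow> 'g::linordered_ab_group_add"
  assumes val: "valuation \<nu>"
  shows "\<And>X :: ('n::finite \<Rightarrow> 'a) set. finite X \<Longrightarrow> card X \<ge> (CARD('n) + 1) * (Suc k - 1) + 1 \<Longrightarrow>
         \<exists>P :: nat \<Rightarrow> ('n \<Rightarrow> 'a) set.
           (\<Union>i\<in>{1..Suc k}. P i) = X \<and>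
           (\<forall>i\<in>{1..Suc k}. \<forall>j\<in>{1..Suc k}. i \<noteq> j \<longrightarrow> P i \<inter> P j = {}) \<and>
           (\<forall>i\<in>{1..<Suc k}. card (P i) = CARD('n) + 1) \<and>
           card (P (Suc k)) = card X - (CARD('n) + 1) * (Suc k - 1) \<and>
           (\<forall>i\<in>{1..Suc k}. \<forall>j\<in>{1..Suc k}. i \<le> j \<longrightarrow> vconv \<nu> (P j) \<subseteq> vconv \<nu> (P i)) \<and>
           P (Suc k) \<noteq> {} \<and> P (Suc k) \<subseteq> (\<Inter>i\<in>{1..Suc k}. vconv \<nu> (P i))"
proof (induction k)
  case 0
  fix X :: "('n::finite \<Rightarrow> 'a) set"
  assume fin: "finite X" and c: "card X \<ge> (CARD('n) + 1) * (Suc 0 - 1) + 1"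
  have ne: "X \<noteq> {}" using c by auto
  show "\<exists>P :: nat \<Rightarrow> ('n \<Rightarrow> 'a) set.
           (\<Union>i\<in>{1..Suc 0}. P i) = X \<and>
           (\<forall>i\<in>{1..Suc 0}. \<forall>j\<in>{1..Suc 0}. i \<noteq> j \<longrightarrow> P i \<inter> P j = {}) \<and>
           (\<forall>i\<in>{1..<Suc 0}. card (P i) = CARD('n) + 1) \<and>
           card (P (Suc 0)) = card X - (CARD('n) + 1) * (Suc 0 - 1) \<and>
           (\<forall>i\<in>{1..Suc 0}. \<forall>j\<in>{1..Suc 0}. i \<le> j \<longrightarrow> vconv \<nu> (P j) \<subseteq> vconv \<nu> (P i)) \<and>
           P (Suc 0) \<noteq> {} \<and> P (Suc 0) \<subseteq> (\<Inter>i\<in>{1..Suc 0}. vconv \<nu> (P i))"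
  proof (rule exI[of _ "\<lambda>_. X"], intro conjI)
    have e1: "{1..Suc 0} = {1::nat}" by auto
    have e2: "{1..<Suc 0} = ({}::nat set)" by auto
    show "(\<Union>i\<in>{1..Suc 0}. X) = X" unfolding e1 by simp
    show "\<forall>i\<in>{1..Suc 0}. \<forall>j\<in>{1..Suc 0}. i \<noteq> j \<longrightarrow> X \<inter> X = {}" unfolding e1 by simp
    show "\<forall>i\<in>{1..<Suc 0}. card X = CARD('n) + 1" unfolding e2 by simp
    show "card X = card X - (CARD('n) + 1) * (Suc 0 - 1)" by simp
    show "\<forall>i\<in>{1..Suc 0}. \<forall>j\<in>{1..Suc 0}. i \<le> j \<longrightarrow> vconv \<nu> X \<subseteq> vconv \<nu> X" by simp
    show "X \<noteq> {}" by (rule ne)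
    show "X \<subseteq> (\<Inter>i\<in>{1..Suc 0}. vconv \<nu> X)" unfolding e1 using vconv_base[OF val, of X] by simp
  qed
next
  case (Suc k)
  fix X :: "('n::finite \<Rightarrow> 'a) set"
  assume fin: "finite X" and c: "card X \<ge> (CARD('n) + 1) * (Suc (Suc k) - 1) + 1"
  define d where "d = CARD('n) + 1"
  have cX: "card X \<ge> CARD('n) + 1" using c by simp
  obtain X1 where X1: "X1 \<subseteq> X" "card X1 = d" "vconv \<nu> X1 = vconv \<nu> X"
    using pick[OF val fin cX] d_def by blast
  define X' where "X' = X - X1"
  have finX': "finite X'" using fin X'_def by simp
  have cX': "card X' = card X - d" using X1 fin by (simp add: X'_def card_Diff_subset finite_subset)
  have "card X' \<ge> (CARD('n) + 1) * (Suc k - 1) + 1" using c cX' d_def by (simp add: algebra_simps)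
  from Suc.IH[OF finX' this] obtain P' where H:
    "(\<Union>i\<in>{1..Suc k}. P' i) = X' \<and>
     (\<forall>i\<in>{1..Suc k}. \<forall>j\<in>{1..Suc k}. i \<noteq> j \<longrightarrow> P' i \<inter> P' j = {}) \<and>
     (\<forall>i\<in>{1..<Suc k}. card (P' i) = CARD('n) + 1) \<and>
     card (P' (Suc k)) = card X' - (CARD('n) + 1) * (Suc k - 1) \<and>
     (\<forall>i\<in>{1..Suc k}. \<forall>j\<in>{1..Suc k}. i \<le> j \<longrightarrow> vconv \<nu> (P' j) \<subseteq> vconv \<nu> (P' i)) \<and>
     P' (Suc k) \<noteq> {} \<and> P' (Suc k) \<subseteq> (\<Inter>i\<in>{1..Suc k}. vconv \<nu> (P' i))"
    by (rule exE)
  note U = H[THEN conjunct1]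
  note Dj = H[THEN conjunct2, THEN conjunct1]
  note C = H[THEN conjunct2, THEN conjunct2, THEN conjunct1]
  note Cr = H[THEN conjunct2, THEN conjunct2, THEN conjunct2, THEN conjunct1]
  note V = H[THEN conjunct2, THEN conjunct2, THEN conjunct2, THEN conjunct2, THEN conjunct1]
  note NE = H[THEN conjunct2, THEN conjunct2, THEN conjunct2, THEN conjunct2, THEN conjunct2, THEN conjunct1]
  have sub: "P' i \<subseteq> X'" if "i \<in> {1..Suc k}" for i using U that by blast
  define P where "P i = (if i = 1 then X1 else P' (i - 1))" for i
  have P1: "P 1 = X1" by (simp add: P_def)
  have PS: "P (Suc i) = P' i" if "i \<ge> 1" for i using that by (simp add: P_def)
  have idx: "i \<in> {1..Suc (Suc k)} \<Longrightarrow> i = 1 \<or> (\<exists>i'\<in>{1..Suc k}. i = Suc i')" for i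
    by (cases i) auto
  have PX: "P i \<subseteq> X" if "i \<in> {1..Suc (Suc k)}" for i
  proof -
    from idx[OF that] show ?thesis
    proof
      assume "i = 1" then show ?thesis using P1 X1(1) by simp
    next
      assume "\<exists>i'\<in>{1..Suc k}. i = Suc i'"
      then obtain i' where "i' \<in> {1..Suc k}" "i = Suc i'" by blast
      then show ?thesis using PS[of i'] sub[of i'] X'_def by auto
    qed
  qed
  have g1: "(\<Union>i\<in>{1..Suc (Suc k)}. P i) = X"
  proof
    show "(\<Union>i\<in>{1..Suc (Suc k)}. P i) \<subseteq> X" using PX by blast
    show "X \<subseteq> (\<Union>i\<in>{1..Suc (Suc k)}. P i)"
    proof
      fix x assume x: "x \<in> X"
      show "x \<in> (\<Union>i\<in>{1..Suc (Suc k)}. P i)"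
      proof (cases "x \<in> X1")
        case True then show ?thesis using P1 by force
      next
        case False
        then have "x \<in> X'" using x X'_def by simp
        then obtain i where i: "i \<in> {1..Suc k}" "x \<in> P' i" using U by blast
        then have "x \<in> P (Suc i)" using PS by simp
        moreover have "Suc i \<in> {1..Suc (Suc k)}" using i by simp
        ultimately show ?thesis by blast
      qed
    qed
  qed
  have g2: "\<forall>i\<in>{1..Suc (Suc k)}. \<forall>j\<in>{1..Suc (Suc k)}. i \<noteq> j \<longrightarrow> P i \<inter> P j = {}"
  proof (intro ballI impI)
    fix i j assume i: "i \<in> {1..Suc (Suc k)}" and j: "j \<in> {1..Suc (Suc k)}" and ij: "i \<noteq> j"
    show "P i \<inter> P j = {}"
    proof (cases "i = 1")
      case True
      then obtain j' where "j' \<in> {1..Suc k}" "j = Suc j'" using idx[OF j] ij by blast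
      then show ?thesis using True P1 PS sub X'_def by fastforce
    next
      case False
      then obtain i' where i': "i' \<in> {1..Suc k}" "i = Suc i'" using idx[OF i] by blast
      show ?thesis
      proof (cases "j = 1")
        case True then show ?thesis using i' P1 PS sub X'_def by fastforce
      next
        case False
        then obtain j' where j': "j' \<in> {1..Suc k}" "j = Suc j'" using idx[OF j] by blast
        then show ?thesis using i' ij Dj PS by auto
      qed
    qed
  qed
  have g3: "\<forall>i\<in>{1..<Suc (Suc k)}. card (P i) = CARD('n) + 1"
  proof
    fix i assume i: "i \<in> {1..<Suc (Suc k)}"
    show "card (P i) = CARD('n) + 1"
    proof (cases "i = 1")
      case True then show ?thesis using P1 X1(2) d_def by simp
    next
      case False
      then obtain i' where "i = Suc i'" "i' \<in> {1..<Suc k}" using i by (cases i) auto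
      then show ?thesis using C PS by simp
    qed
  qed
  have g4: "card (P (Suc (Suc k))) = card X - (CARD('n) + 1) * (Suc (Suc k) - 1)"
    using PS[of "Suc k"] Cr cX' d_def by (simp add: algebra_simps diff_diff_left)
  have g5: "\<forall>i\<in>{1..Suc (Suc k)}. \<forall>j\<in>{1..Suc (Suc k)}. i \<le> j \<longrightarrow> vconv \<nu> (P j) \<subseteq> vconv \<nu> (P i)"
  proof (intro ballI impI)
    fix i j assume i: "i \<in> {1..Suc (Suc k)}" and j: "j \<in> {1..Suc (Suc k)}" and ij: "i \<le> j"
    show "vconv \<nu> (P j) \<subseteq> vconv \<nu> (P i)"
    proof (cases "i = 1")
      case True
      then show ?thesis using vconv_mono[OF PX[OF j], of \<nu>] X1(3) P1 by simp
    next
      case False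
      then obtain i' where i': "i' \<in> {1..Suc k}" "i = Suc i'" using idx[OF i] by blast
      then have "j \<noteq> 1" using ij by auto
      then obtain j' where j': "j' \<in> {1..Suc k}" "j = Suc j'" using idx[OF j] by blast
      then show ?thesis using i' ij V PS by auto
    qed
  qed
  have g6: "P (Suc (Suc k)) \<noteq> {}" using NE PS[of "Suc k"] by simp
  have g7: "P (Suc (Suc k)) \<subseteq> (\<Inter>i\<in>{1..Suc (Suc k)}. vconv \<nu> (P i))"
  proof
    fix x assume x: "x \<in> P (Suc (Suc k))"
    have "x \<in> vconv \<nu> (P (Suc (Suc k)))" using x vconv_base[OF val] by blast
    then show "x \<in> (\<Inter>i\<in>{1..Suc (Suc k)}. vconv \<nu> (P i))" using g5 by force
  qed
  show "\<exists>P :: nat \<Rightarrow> ('n \<Rightarrow> 'a) set.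
           (\<Union>i\<in>{1..Suc (Suc k)}. P i) = X \<and>
           (\<forall>i\<in>{1..Suc (Suc k)}. \<forall>j\<in>{1..Suc (Suc k)}. i \<noteq> j \<longrightarrow> P i \<inter> P j = {}) \<and>
           (\<forall>i\<in>{1..<Suc (Suc k)}. card (P i) = CARD('n) + 1) \<and>
           card (P (Suc (Suc k))) = card X - (CARD('n) + 1) * (Suc (Suc k) - 1) \<and>
           (\<forall>i\<in>{1..Suc (Suc k)}. \<forall>j\<in>{1..Suc (Suc k)}. i \<le> j \<longrightarrow> vconv \<nu> (P j) \<subseteq> vconv \<nu> (P i)) \<and>
           P (Suc (Suc k)) \<noteq> {} \<and> P (Suc (Suc k)) \<subseteq> (\<Inter>i\<in>{1..Suc (Suc k)}. vconv \<nu> (P i))"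
    by (rule exI[of _ P]) (intro conjI g1 g2 g3 g4 g5 g6 g7)
qed

theorem theorem4p15:
  fixes \<nu> :: "'a::field \<Rightarrow> 'g::linordered_ab_group_add"
    and X :: "('n::finite \<Rightarrow> 'a) set"
    and r :: nat
  assumes "valuation \<nu>"
    and "r \<ge> 1"
    and "finite X"
    and "card X \<ge> (CARD('n) + 1) * (r - 1) + 1"
  shows "\<exists>P :: nat \<Rightarrow> ('n \<Rightarrow> 'a) set.
           (\<Union>i\<in>{1..r}. P i) = X \<and>
           (\<forall>i\<in>{1..r}. \<forall>j\<in>{1..r}. i \<noteq> j \<longrightarrow> P i \<inter> P j = {}) \<and>
           (\<forall>i\<in>{1..<r}. card (P i) = CARD('n) + 1) \<and>
           card (P r) = card X - (CARD('n) + 1) * (r - 1) \<and>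
           (\<forall>i\<in>{1..r}. \<forall>j\<in>{1..r}. i \<le> j \<longrightarrow> vconv \<nu> (P j) \<subseteq> vconv \<nu> (P i)) \<and>
           P r \<noteq> {} \<and> P r \<subseteq> (\<Inter>i\<in>{1..r}. vconv \<nu> (P i))"
proof -
  obtain k where k: "r = Suc k" using assms(2) by (cases r) auto
  have c: "card X \<ge> (CARD('n) + 1) * (Suc k - 1) + 1" using assms(4) k by simp
  show ?thesis unfolding k by (rule main_aux[OF assms(1) assms(3) c])
qed

end
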